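(* Let $T\in B(\mathcal{F})$ be a block-diagonal operator and let $(A_n)_{n\ge0}$ be its sequence of $\mathcal{C}$-approximants. Then for every $n\ge1$, \[\|A_{n+1}-A_n\|=\|T|_{\mathcal{F}_{n+1}}-(T|_{\mathcal{F}_n})\otimes I\|,\] where $(T|_{\mathcal{F}_n})\otimes I$ acts on $\mathcal{F}_{n+1}=\mathcal{F}_n\otimes\mathbb{C}^d$.
   Context: $d\ge2$; $\xi_1,\ldots,\xi_d$ is the standard orthonormal basis of $\mathbb{C}^d$. $\mathcal{F}=\bigoplus_{n\ge0}\mathcal{F}_n$ is the full Fock space, $\mathcal{F}_0=\mathbb{C}\Omega$, $\mathcal{F}_n=(\mathbb{C}^d)^{\otimes n}$ with the usual inner product. $L_j\eta=\xi_j\otimes\eta$ (and $L_j\Omega=\xi_j$) are the left creation operators. $T$ is block-diagonal if $T(\mathcal{F}_n)\subseteq\mathcal{F}_n$ for all $n$. The $\mathcal{C}$-approximants of $T$ are defined recursively by $A_0=\langle T\Omega,\Omega\rangle I_{\mathcal{F}}$ and, for $n\ge0$, $A_{n+1}=A_n+\sum c_{i_1,\ldots,i_{n+1};j_1,\ldots,j_{n+1}}(L_{i_1}\cdots L_{i_{n+1}})(L_{j_1}\cdots L_{j_{n+1}})^*$, the sum over all $1\le i_1,\ldots,i_{n+1},j_1,\ldots,j_{n+1}\le d$, with $c_{i_1,\ldots,i_{n+1};j_1,\ldots,j_{n+1}}=\langle T(\xi_{j_1}\otimes\cdots\otimes\xi_{j_{n+1}}),\xi_{i_1}\otimes\cdots\otimes\xi_{i_{n+1}}\rangle-\delta_{i_{n+1},j_{n+1}}\langle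 T(\xi_{j_1}\otimes\cdots\otimes\xi_{j_n}),\xi_{i_1}\otimes\cdots\otimes\xi_{i_n}\rangle$ (for $n=0$ the second inner product is $\langle T\Omega,\Omega\rangle$). *)

theory Defs
  imports "HOL-Analysis.Analysis"
begin

text \<open>Concrete model of the full Fock space over C^d.  The orthonormal basis vector
  xi_{i1} (x) ... (x) xi_{in} is indexed by the word [i1,...,in] (letters in 0..<d,
  i.e. letter k stands for xi_{k+1}); the vacuum Omega is the empty word.\<close>

type_synonym fvec = "nat list \<Rightarrow> complex"
type_synonym fop = "fvec \<Rightarrow> fvec"

definition words :: "nat \<Rightarrow> nat \<Rightarrow> nat list set" where
  "words d n = {w. length w = n \<and> set w \<subseteq> {..<d}}"

definition fock :: "nat \<Rightarrow> fvec set" where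
  "fock d = {f. (\<forall>w. f w \<noteq> 0 \<longrightarrow> set w \<subseteq> {..<d}) \<and>
                 (\<lambda>w. (cmod (f w))^2) summable_on UNIV}"

definition fock_n :: "nat \<Rightarrow> nat \<Rightarrow> fvec set" where
  "fock_n d n = {f \<in> fock d. \<forall>w. f w \<noteq> 0 \<longrightarrow> length w = n}"

definition fnorm :: "fvec \<Rightarrow> real" where
  "fnorm f = sqrt (infsum (\<lambda>w. (cmod (f w))^2) UNIV)"

definition finner :: "fvec \<Rightarrow> fvec \<Rightarrow> complex" where
  "finner f g = infsum (\<lambda>w. f w * cnj (g w)) UNIV"

definition bvec :: "nat list \<Rightarrow> fvec" where
  "bvec u = (\<lambda>w. if w = u then 1 else 0)"

definition bounded_op :: "nat \<Rightarrow> fop \<Rightarrow> bool" where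
  "bounded_op d T \<longleftrightarrow>
     (\<forall>f \<in> fock d. T f \<in> fock d) \<and>
     (\<forall>f \<in> fock d. \<forall>g \<in> fock d. \<forall>a. T (\<lambda>w. a * f w + g w) = (\<lambda>w. a * T f w + T g w)) \<and>
     (\<exists>K. \<forall>f \<in> fock d. fnorm (T f) \<le> K * fnorm f)"

definition block_diag :: "nat \<Rightarrow> fop \<Rightarrow> bool" where
  "block_diag d T \<longleftrightarrow> (\<forall>n. \<forall>f \<in> fock_n d n. T f \<in> fock_n d n)"

definition op_norm :: "nat \<Rightarrow> fop \<Rightarrow> real" where
  "op_norm d S = Sup {fnorm (S f) | f. f \<in> fock d \<and> fnorm f \<le> 1}"

definition op_norm_on :: "nat \<Rightarrow> nat \<Rightarrow> fop \<Rightarrow> real" where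
  "op_norm_on d m S = Sup {fnorm (S f) | f. f \<in> fock_n d m \<and> fnorm f \<le> 1}"

definition Lcre :: "nat \<Rightarrow> fop" where
  "Lcre j f = (\<lambda>w. case w of [] \<Rightarrow> 0 | k # v \<Rightarrow> if k = j then f v else 0)"

definition Lcre_adj :: "nat \<Rightarrow> fop" where
  "Lcre_adj j f = (\<lambda>w. f (j # w))"

fun Lword :: "nat list \<Rightarrow> fop" where
  "Lword [] = id"
| "Lword (i # I) = Lcre i \<circ> Lword I"

fun Lword_adj :: "nat list \<Rightarrow> fop" where
  "Lword_adj [] = id"
| "Lword_adj (i # I) = Lword_adj I \<circ> Lcre_adj i"

definition ccoef :: "fop \<Rightarrow> nat list \<Rightarrow> nat list \<Rightarrow> complex" where
  "ccoef T I J = finner (T (bvec J)) (bvec I)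
     - (if last I = last J then finner (T (bvec (butlast J))) (bvec (butlast I)) else 0)"

fun C_approx :: "nat \<Rightarrow> fop \<Rightarrow> nat \<Rightarrow> fop" where
  "C_approx d T 0 = (\<lambda>f w. finner (T (bvec [])) (bvec []) * f w)"
| "C_approx d T (Suc n) = (\<lambda>f w. C_approx d T n f w +
      (\<Sum>IJ \<in> words d (Suc n) \<times> words d (Suc n).
          ccoef T (fst IJ) (snd IJ) * Lword (fst IJ) (Lword_adj (snd IJ) f) w))"

text \<open>(S restricted to F_n) tensor I acting on F_{n+1} = F_n (x) C^d, identifying
  xi_v (x) xi_j with the word v @ [j]\<close>
definition tensor_id :: "fop \<Rightarrow> fop" where
  "tensor_id S f = (\<lambda>w. if w = [] then 0 else S (\<lambda>v. f (v @ [last w])) (butlast w))"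

end

theory Submission
  imports Defs
begin


lemma finite_words: "finite (words d n)"
proof -
  have "words d n = {xs. set xs \<subseteq> {..<d} \<and> length xs = n}" unfolding words_def by auto
  thus ?thesis using finite_lists_length_eq[of "{..<d}" n] by simp
qed

lemma fin_supp_fock:
  assumes "finite S" "\<And>w. f w \<noteq> 0 \<Longrightarrow> w \<in> S \<and> set w \<subseteq> {..<d}"
  shows "f \<in> fock d"
proof -
  have "(\<lambda>w. (cmod (f w))^2) summable_on S" using assms(1) by simp
  hence "(\<lambda>w. (cmod (f w))^2) summable_on UNIV"
    by (rule summable_on_cong_neutral[THEN iffD1, rotated -1]) (use assms(2) in auto)
  thus ?thesis unfolding fock_def using assms(2) by auto
qed

lemma fnorm_fin:
  assumes "finite S" "\<And>w. w \<notin> S \<Longrightarrow> f w = 0"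
  shows "fnorm f = sqrt (\<Sum>w\<in>S. (cmod (f w))^2)"
proof -
  have "infsum (\<lambda>w. (cmod (f w))^2) UNIV = infsum (\<lambda>w. (cmod (f w))^2) S"
    by (rule infsum_cong_neutral) (use assms(2) in auto)
  thus ?thesis unfolding fnorm_def using assms(1) by simp
qed

lemma finner_bvec: "finner f (bvec u) = f u"
proof -
  have "finner f (bvec u) = infsum (\<lambda>w. f w * cnj (bvec u w)) {u}"
    unfolding finner_def by (rule infsum_cong_neutral) (auto simp: bvec_def)
  thus ?thesis by (simp add: bvec_def)
qed

lemma Lword_adj_eq: "Lword_adj J f = (\<lambda>v. f (J @ v))"
  by (induction J arbitrary: f) (auto simp: Lcre_adj_def)

lemma Lword_eq: "Lword I g w = (if take (length I) w = I then g (drop (length I) w) else 0)"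
  by (induction I arbitrary: w) (auto simp: Lcre_def split: list.splits)

lemma fock_n_supp: "f \<in> fock_n d m \<Longrightarrow> f w \<noteq> 0 \<Longrightarrow> w \<in> words d m"
  unfolding fock_n_def fock_def words_def by auto

lemma bvec_fock_n: "K \<in> words d m \<Longrightarrow> bvec K \<in> fock_n d m"
  unfolding fock_n_def
  by (auto simp: bvec_def words_def split: if_splits intro!: fin_supp_fock[of "{K}"])

lemma lin:
  assumes "bounded_op d T" "f \<in> fock d" "g \<in> fock d"
  shows "T (\<lambda>w. a * f w + g w) = (\<lambda>w. a * T f w + T g w)"
  using assms unfolding bounded_op_def by blast

lemma T_zero:
  assumes "bounded_op d T" shows "T (\<lambda>w. 0) = (\<lambda>w. 0)"
proof -
  have z: "(\<lambda>w::nat list. 0::complex) \<in> fock d" by (rule fin_supp_fock[of "{}"]) auto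
  have "T (\<lambda>w. 1 * 0 + 0) = (\<lambda>w. 1 * T (\<lambda>w. 0) w + T (\<lambda>w. 0) w)"
    using lin[OF assms z z, of 1] by simp
  hence "\<And>w. T (\<lambda>w. 0) w = T (\<lambda>w. 0) w + T (\<lambda>w. 0) w" by (metis add_0 mult_1)
  thus ?thesis by auto
qed

lemma T_sum:
  assumes "bounded_op d T" "finite S" "\<And>K. K \<in> S \<Longrightarrow> set K \<subseteq> {..<d}"
  shows "T (\<lambda>w. \<Sum>K\<in>S. a K * bvec K w) = (\<lambda>w. \<Sum>K\<in>S. a K * T (bvec K) w)"
  using assms(2,3)
proof (induction S rule: finite_induct)
  case empty thus ?case using T_zero[OF assms(1)] by simp
next
  case (insert x F)
  have fx: "bvec x \<in> fock d"
    by (rule fin_supp_fock[of "{x}"]) (use insert.prems in \<open>auto simp: bvec_def split: if_splits\<close>)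
  have fF: "(\<lambda>w. \<Sum>K\<in>F. a K * bvec K w) \<in> fock d"
  proof (rule fin_supp_fock[of F])
    fix w assume "(\<Sum>K\<in>F. a K * bvec K w) \<noteq> 0"
    then obtain K where "K \<in> F" "a K * bvec K w \<noteq> 0" by (rule sum.not_neutral_contains_not_neutral)
    hence "K \<in> F" "bvec K w \<noteq> 0" by auto
    thus "w \<in> F \<and> set w \<subseteq> {..<d}" using insert.prems by (auto simp: bvec_def split: if_splits)
  qed (use insert in auto)
  have "T (\<lambda>w. \<Sum>K\<in>insert x F. a K * bvec K w) = T (\<lambda>w. a x * bvec x w + (\<Sum>K\<in>F. a K * bvec K w))"
    using insert by simp
  also have "\<dots> = (\<lambda>w. a x * T (bvec x) w + T (\<lambda>w. \<Sum>K\<in>F. a K * bvec K w) w)"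
    by (rule lin[OF assms(1) fx fF])
  also have "\<dots> = (\<lambda>w. \<Sum>K\<in>insert x F. a K * T (bvec K) w)"
    using insert by simp
  finally show ?case .
qed

lemma fock_n_expand:
  assumes "f \<in> fock_n d m" shows "f = (\<lambda>w. \<Sum>K\<in>words d m. f K * bvec K w)"
proof
  fix w
  have "(\<Sum>K\<in>words d m. f K * bvec K w) = (\<Sum>K\<in>words d m. if K = w then f w else 0)"
    by (rule sum.cong) (auto simp: bvec_def)
  also have "\<dots> = f w" using fock_n_supp[OF assms, of w] finite_words by (auto simp: sum.delta)
  finally show "f w = (\<Sum>K\<in>words d m. f K * bvec K w)" by simp
qed

lemma Texp:
  assumes "bounded_op d T" "block_diag d T" "f \<in> fock_n d m"
  shows "T f u = (if u \<in> words d m then \<Sum>K\<in>words d m. f K * finner (T (bvec K)) (bvec u) else 0)"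
proof -
  have "T f u = (\<Sum>K\<in>words d m. f K * T (bvec K) u)"
  proof -
    have "T f = T (\<lambda>w. \<Sum>K\<in>words d m. f K * bvec K w)"
      using fock_n_expand[OF assms(3)] by (rule arg_cong)
    also have "\<dots> = (\<lambda>w. \<Sum>K\<in>words d m. f K * T (bvec K) w)"
      by (rule T_sum[OF assms(1) finite_words]) (simp add: words_def)
    finally show ?thesis by simp
  qed
  also have "\<dots> = (if u \<in> words d m then \<Sum>K\<in>words d m. f K * finner (T (bvec K)) (bvec u) else 0)"
  proof (cases "u \<in> words d m")
    case True thus ?thesis by (simp add: finner_bvec)
  next
    case False
    have "T (bvec K) u = 0" if "K \<in> words d m" for K
    proof -
      have "T (bvec K) \<in> fock_n d m" using assms(2) bvec_fock_n[OF that] unfolding block_diag_def by blast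
      thus ?thesis using fock_n_supp False by blast
    qed
    thus ?thesis using False by simp
  qed
  finally show ?thesis .
qed

lemma words_Suc_len: "J \<in> words d (Suc n) \<Longrightarrow> length J = Suc n"
  by (simp add: words_def)

lemma D_formula:
  "C_approx d T (Suc n) f w - C_approx d T n f w =
   (if take (Suc n) w \<in> words d (Suc n)
    then \<Sum>J\<in>words d (Suc n). ccoef T (take (Suc n) w) J * f (J @ drop (Suc n) w) else 0)"
proof -
  let ?W = "words d (Suc n)"
  have "C_approx d T (Suc n) f w - C_approx d T n f w =
     (\<Sum>IJ \<in> ?W \<times> ?W. ccoef T (fst IJ) (snd IJ) * Lword (fst IJ) (Lword_adj (snd IJ) f) w)"
    by simp
  also have "\<dots> = (\<Sum>I\<in>?W. \<Sum>J\<in>?W. ccoef T I J * Lword I (Lword_adj J f) w)"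
    by (simp add: sum.cartesian_product split_def)
  also have "\<dots> = (\<Sum>I\<in>?W. if take (Suc n) w = I then \<Sum>J\<in>?W. ccoef T I J * f (J @ drop (Suc n) w) else 0)"
    by (rule sum.cong) (auto simp: Lword_eq Lword_adj_eq words_Suc_len)
  also have "\<dots> = (if take (Suc n) w \<in> ?W
    then \<Sum>J\<in>?W. ccoef T (take (Suc n) w) J * f (J @ drop (Suc n) w) else 0)"
    using finite_words by (simp add: sum.delta)
  finally show ?thesis .
qed

lemma TI_formula:
  assumes "bounded_op d T" "block_diag d T" "g \<in> fock_n d (Suc n)"
  shows "tensor_id T g w = (if w \<noteq> [] \<and> butlast w \<in> words d n
     then \<Sum>K\<in>words d n. g (K @ [last w]) * finner (T (bvec K)) (bvec (butlast w)) else 0)"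
proof (cases "w = []")
  case True thus ?thesis by (simp add: tensor_id_def)
next
  case False
  let ?h = "\<lambda>v. g (v @ [last w])"
  have sup: "v \<in> words d n" if "?h v \<noteq> 0" for v
    using fock_n_supp[OF assms(3) that] by (auto simp: words_def)
  have "?h \<in> fock d"
  proof (rule fin_supp_fock[OF finite_words[of d n]])
    fix v assume "?h v \<noteq> 0"
    hence "v \<in> words d n" by (rule sup)
    thus "v \<in> words d n \<and> set v \<subseteq> {..<d}" by (auto simp: words_def)
  qed
  hence "?h \<in> fock_n d n" unfolding fock_n_def using sup by (auto simp: words_def)
  from Texp[OF assms(1,2) this] False show ?thesis by (simp add: tensor_id_def)
qed

lemma Q_formula:
  assumes "bounded_op d T" "block_diag d T" "g \<in> fock_n d (Suc n)"
  shows "T g w - tensor_id T g w =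
    (if w \<in> words d (Suc n) then \<Sum>J\<in>words d (Suc n). ccoef T w J * g J else 0)"
proof (cases "w \<in> words d (Suc n)")
  case False
  have "tensor_id T g w = 0"
  proof -
    have "g (K @ [last w]) = 0" if "w \<noteq> []" "butlast w \<in> words d n" "K \<in> words d n" for K
    proof (rule ccontr)
      assume "g (K @ [last w]) \<noteq> 0"
      hence "K @ [last w] \<in> words d (Suc n)" using fock_n_supp[OF assms(3)] by blast
      hence "butlast w @ [last w] \<in> words d (Suc n)" using that
        by (auto simp: words_def simp del: append_butlast_last_id)
      moreover have "butlast w @ [last w] = w" using that(1) by simp
      ultimately show False using False by simp
    qed
    thus ?thesis using TI_formula[OF assms] by simp
  qed
  thus ?thesis using Texp[OF assms(1,2,3), of w] False by simp
next
  case True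
  let ?W = "words d (Suc n)"
  let ?F = "\<lambda>X. finner (T (bvec X)) (bvec (butlast w))"
  have wne: "w \<noteq> []" "butlast w \<in> words d n" using True by (auto simp: words_def dest: in_set_butlastD)
  have "(\<Sum>J\<in>?W. ccoef T w J * g J) = (\<Sum>J\<in>?W. g J * finner (T (bvec J)) (bvec w))
       - (\<Sum>J\<in>?W. if last J = last w then ?F (butlast J) * g J else 0)"
    unfolding ccoef_def sum_subtractf[symmetric] by (intro sum.cong) (auto simp: algebra_simps)
  also have "(\<Sum>J\<in>?W. if last J = last w then ?F (butlast J) * g J else 0)
      = (\<Sum>J\<in>{J\<in>?W. last J = last w}. ?F (butlast J) * g J)"
    using finite_words by (simp add: sum.inter_filter)
  also have "{J\<in>?W. last J = last w} = (\<lambda>K. K @ [last w]) ` words d n"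
  proof (intro set_eqI iffI)
    fix J assume "J \<in> {J\<in>?W. last J = last w}"
    hence J: "J \<in> ?W" "last J = last w" by auto
    hence "J \<noteq> []" by (auto simp: words_def)
    hence "J = butlast J @ [last w]" using J(2) by (metis append_butlast_last_id)
    moreover have "butlast J \<in> words d n" using J(1) by (auto simp: words_def dest: in_set_butlastD)
    ultimately show "J \<in> (\<lambda>K. K @ [last w]) ` words d n" by blast
  next
    fix J assume "J \<in> (\<lambda>K. K @ [last w]) ` words d n"
    then obtain K where "K \<in> words d n" "J = K @ [last w]" by auto
    moreover have "last w < d" using True last_in_set[OF wne(1)] unfolding words_def by blast
    ultimately show "J \<in> {J\<in>?W. last J = last w}" by (auto simp: words_def)
  qed
  also have "(\<Sum>J\<in>(\<lambda>K. K @ [last w]) ` words d n. ?F (butlast J) * g J)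
     = (\<Sum>K\<in>words d n. g (K @ [last w]) * ?F K)"
    by (subst sum.reindex) (auto simp: inj_on_def mult.commute)
  finally show ?thesis
    using Texp[OF assms(1,2,3), of w] TI_formula[OF assms, of w] True wne by simp
qed


lemma fock_n_scale: "g \<in> fock_n d m \<Longrightarrow> (\<lambda>w. a * g w) \<in> fock_n d m"
proof -
  assume g: "g \<in> fock_n d m"
  have "(\<lambda>w. a * g w) \<in> fock d"
  proof (rule fin_supp_fock[OF finite_words[of d m]])
    fix w assume "a * g w \<noteq> 0"
    hence "w \<in> words d m" using fock_n_supp[OF g] by auto
    thus "w \<in> words d m \<and> set w \<subseteq> {..<d}" by (auto simp: words_def)
  qed
  thus ?thesis using g unfolding fock_n_def by auto
qed

lemma fnorm_fock_n: "g \<in> fock_n d m \<Longrightarrow> fnorm g = sqrt (\<Sum>w\<in>words d m. (cmod (g w))^2)"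
  by (rule fnorm_fin[OF finite_words]) (use fock_n_supp in blast)

lemma fnorm_scale:
  assumes "finite S" "\<And>w. w \<notin> S \<Longrightarrow> f w = 0"
  shows "fnorm (\<lambda>w. a * f w) = cmod a * fnorm f"
proof -
  have "fnorm (\<lambda>w. a * f w) = sqrt (\<Sum>w\<in>S. (cmod (a * f w))^2)"
    by (rule fnorm_fin[OF assms(1)]) (use assms(2) in auto)
  also have "\<dots> = sqrt ((cmod a)^2 * (\<Sum>w\<in>S. (cmod (f w))^2))"
    by (simp add: norm_mult power_mult_distrib sum_distrib_left)
  also have "\<dots> = cmod a * sqrt (\<Sum>w\<in>S. (cmod (f w))^2)"
    by (simp add: real_sqrt_mult)
  also have "\<dots> = cmod a * fnorm f" using fnorm_fin[OF assms] by simp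
  finally show ?thesis .
qed

lemma Q_app:
  assumes "bounded_op d T" "block_diag d T" "g \<in> fock_n d (Suc n)"
  shows "(T g - tensor_id T g) w =
    (if w \<in> words d (Suc n) then \<Sum>J\<in>words d (Suc n). ccoef T w J * g J else 0)"
  using Q_formula[OF assms] by (simp add: fun_diff_def)

lemma fnormQ:
  assumes "bounded_op d T" "block_diag d T" "g \<in> fock_n d (Suc n)"
  shows "fnorm (T g - tensor_id T g) = sqrt (\<Sum>w\<in>words d (Suc n). (cmod ((T g - tensor_id T g) w))^2)"
  by (rule fnorm_fin[OF finite_words]) (subst Q_app[OF assms], simp)

lemma coord_le_fnorm:
  assumes "g \<in> fock_n d m" shows "cmod (g J) \<le> fnorm g"
proof (cases "J \<in> words d m")
  case True
  have "(cmod (g J))^2 \<le> (\<Sum>w\<in>words d m. (cmod (g w))^2)"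
    by (rule member_le_sum[OF True]) (auto simp: finite_words)
  thus ?thesis using fnorm_fock_n[OF assms] by (simp add: real_le_rsqrt)
next
  case False
  hence "g J = 0" using fock_n_supp[OF assms] by blast
  moreover have "0 \<le> (\<Sum>w\<in>words d m. (cmod (g w))^2)" by (rule sum_nonneg) simp
  ultimately show ?thesis using fnorm_fock_n[OF assms] by simp
qed

lemma S2_bdd:
  assumes "bounded_op d T" "block_diag d T"
  shows "bdd_above {fnorm ((\<lambda>f. T f - tensor_id T f) f) | f. f \<in> fock_n d (Suc n) \<and> fnorm f \<le> 1}"
proof -
  let ?W = "words d (Suc n)"
  define M where "M = (\<Sum>I\<in>?W. \<Sum>J\<in>?W. cmod (ccoef T I J))"
  have "fnorm (T g - tensor_id T g) \<le> sqrt (\<Sum>w\<in>?W. M^2)"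
    if g: "g \<in> fock_n d (Suc n)" "fnorm g \<le> 1" for g
  proof -
    have "(cmod ((T g - tensor_id T g) w))^2 \<le> M^2" if w: "w \<in> ?W" for w
    proof -
      have "cmod ((T g - tensor_id T g) w) = cmod (\<Sum>J\<in>?W. ccoef T w J * g J)"
        using Q_app[OF assms g(1)] w by simp
      also have "\<dots> \<le> (\<Sum>J\<in>?W. cmod (ccoef T w J) * cmod (g J))"
        by (rule order_trans[OF norm_sum]) (simp add: norm_mult)
      also have "\<dots> \<le> (\<Sum>J\<in>?W. cmod (ccoef T w J))"
      proof (rule sum_mono)
        fix J have "cmod (g J) \<le> 1" using coord_le_fnorm[OF g(1), of J] g(2) by simp
        thus "cmod (ccoef T w J) * cmod (g J) \<le> cmod (ccoef T w J)"
          by (simp add: mult_left_le)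
      qed
      also have "\<dots> \<le> M" unfolding M_def
        by (rule member_le_sum[OF w]) (auto simp: finite_words intro: sum_nonneg)
      finally show ?thesis by (rule power_mono) simp
    qed
    hence "(\<Sum>w\<in>?W. (cmod ((T g - tensor_id T g) w))^2) \<le> (\<Sum>w\<in>?W. M^2)"
      by (rule sum_mono)
    thus ?thesis using fnormQ[OF assms g(1)] by simp
  qed
  thus ?thesis by (intro bdd_aboveI[where M="sqrt (\<Sum>w\<in>?W. M^2)"]) auto
qed

lemma fnorm_nonneg: "0 \<le> fnorm f"
  unfolding fnorm_def by (simp add: infsum_nonneg)

lemma zero_fock_n: "(\<lambda>w. 0) \<in> fock_n d m"
  unfolding fock_n_def by (auto intro: fin_supp_fock[of "{}"])

lemma K_nonneg:
  assumes "bounded_op d T" "block_diag d T"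
  shows "0 \<le> op_norm_on d (Suc n) (\<lambda>f. T f - tensor_id T f)"
proof -
  have "fnorm ((\<lambda>f. T f - tensor_id T f) (\<lambda>w. 0)) \<le> op_norm_on d (Suc n) (\<lambda>f. T f - tensor_id T f)"
    unfolding op_norm_on_def
    by (rule cSup_upper[OF _ S2_bdd[OF assms]]) (use zero_fock_n in \<open>auto simp: fnorm_def\<close>)
  moreover have "0 \<le> fnorm ((\<lambda>f. T f - tensor_id T f) (\<lambda>w. 0))" by (rule fnorm_nonneg)
  ultimately show ?thesis by linarith
qed

lemma QB:
  assumes "bounded_op d T" "block_diag d T" "g \<in> fock_n d (Suc n)"
  shows "fnorm (T g - tensor_id T g) \<le> op_norm_on d (Suc n) (\<lambda>f. T f - tensor_id T f) * fnorm g"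
proof (cases "fnorm g = 0")
  case True
  hence "g J = 0" for J using coord_le_fnorm[OF assms(3), of J] by simp
  hence "(T g - tensor_id T g) w = 0" for w using Q_app[OF assms, of w] by simp
  thus ?thesis using fnormQ[OF assms] True by simp
next
  case False
  define t where "t = fnorm g"
  have tpos: "t > 0" using False fnorm_nonneg[of g] unfolding t_def by linarith
  define h where "h = (\<lambda>w. complex_of_real (1/t) * g w)"
  have h: "h \<in> fock_n d (Suc n)" unfolding h_def by (rule fock_n_scale[OF assms(3)])
  have gs: "\<And>w. w \<notin> words d (Suc n) \<Longrightarrow> g w = 0" using fock_n_supp[OF assms(3)] by blast
  have "fnorm h = cmod (complex_of_real (1/t)) * fnorm g" unfolding h_def
    by (rule fnorm_scale[of "words d (Suc n)" g, OF finite_words gs])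
  hence "fnorm h = 1" using tpos unfolding t_def by (simp add: norm_divide)
  hence fh: "fnorm h \<le> 1" using tpos by simp
  have Qh: "T h - tensor_id T h = (\<lambda>w. complex_of_real (1/t) * (T g - tensor_id T g) w)"
  proof
    fix w show "(T h - tensor_id T h) w = complex_of_real (1/t) * (T g - tensor_id T g) w"
      unfolding Q_app[OF assms(1,2) h] Q_app[OF assms] by (simp add: h_def sum_distrib_left sum_divide_distrib algebra_simps)
  qed
  have qs: "\<And>w. w \<notin> words d (Suc n) \<Longrightarrow> (T g - tensor_id T g) w = 0"
    using Q_app[OF assms] by simp
  have "fnorm (T h - tensor_id T h) = cmod (complex_of_real (1/t)) * fnorm (T g - tensor_id T g)"
    unfolding Qh by (rule fnorm_scale[of "words d (Suc n)" "T g - tensor_id T g", OF finite_words qs])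
  hence "fnorm (T h - tensor_id T h) = 1/t * fnorm (T g - tensor_id T g)"
    using tpos by (simp add: norm_divide)
  moreover have "fnorm (T h - tensor_id T h) \<le> op_norm_on d (Suc n) (\<lambda>f. T f - tensor_id T f)"
    unfolding op_norm_on_def
    by (rule cSup_upper[OF _ S2_bdd[OF assms(1,2)]]) (use h fh in auto)
  ultimately have "fnorm (T g - tensor_id T g) / t \<le> op_norm_on d (Suc n) (\<lambda>f. T f - tensor_id T f)"
    by simp
  thus ?thesis using tpos unfolding t_def by (simp add: divide_le_eq mult.commute)
qed

lemma DQ:
  assumes "bounded_op d T" "block_diag d T" "f \<in> fock_n d (Suc n)"
  shows "C_approx d T (Suc n) f - C_approx d T n f = T f - tensor_id T f"
proof
  fix w
  let ?W = "words d (Suc n)"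
  have L: "(C_approx d T (Suc n) f - C_approx d T n f) w = C_approx d T (Suc n) f w - C_approx d T n f w"
    by (simp add: fun_diff_def)
  have "C_approx d T (Suc n) f w - C_approx d T n f w = (if take (Suc n) w \<in> ?W
    then \<Sum>J\<in>?W. ccoef T (take (Suc n) w) J * f (J @ drop (Suc n) w) else 0)"
    by (rule D_formula)
  also have "\<dots> = (if w \<in> ?W then \<Sum>J\<in>?W. ccoef T w J * f J else 0)"
  proof (cases "take (Suc n) w \<in> ?W")
    case True
    show ?thesis
    proof (cases "drop (Suc n) w = []")
      case True2: True
      hence "take (Suc n) w = w" by (metis append_Nil2 append_take_drop_id)
      thus ?thesis using True True2 by simp
    next
      case False
      have "length w \<noteq> Suc n" using False by simp
      hence "w \<notin> ?W" by (auto simp: words_def)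
      moreover have "f (J @ drop (Suc n) w) = 0" if "J \<in> ?W" for J
      proof -
        have "length (J @ drop (Suc n) w) \<noteq> Suc n" using False that by (simp add: words_def)
        hence "J @ drop (Suc n) w \<notin> ?W" by (auto simp: words_def)
        thus ?thesis using fock_n_supp[OF assms(3)] by blast
      qed
      ultimately show ?thesis using True by simp
    qed
  next
    case False
    hence "w \<notin> ?W" by (auto simp: words_def)
    thus ?thesis using False by simp
  qed
  also have "\<dots> = (T f - tensor_id T f) w" using Q_app[OF assms] by simp
  finally show "(C_approx d T (Suc n) f - C_approx d T n f) w = (T f - tensor_id T f) w"
    using L by simp
qed


lemma B:
  assumes "bounded_op d T" "block_diag d T" "f \<in> fock d" "fnorm f \<le> 1"
  shows "fnorm (C_approx d T (Suc n) f - C_approx d T n f) \<le> op_norm_on d (Suc n) (\<lambda>f. T f - tensor_id T f)"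
proof -
  let ?W = "words d (Suc n)"
  define K where "K = op_norm_on d (Suc n) (\<lambda>f. T f - tensor_id T f)"
  define Df where "Df = C_approx d T (Suc n) f - C_approx d T n f"
  have Kn: "0 \<le> K" unfolding K_def by (rule K_nonneg[OF assms(1,2)])
  have Dfw: "Df w = (if take (Suc n) w \<in> ?W
    then \<Sum>J\<in>?W. ccoef T (take (Suc n) w) J * f (J @ drop (Suc n) w) else 0)" for w
    using D_formula[of d T n f w] by (simp add: Df_def fun_diff_def)
  define g where "g v = (\<lambda>w. if w \<in> ?W then f (w @ v) else 0)" for v
  have gf: "g v \<in> fock_n d (Suc n)" for v
  proof -
    have "g v \<in> fock d"
      by (rule fin_supp_fock[OF finite_words[of d "Suc n"]]) (auto simp: g_def words_def split: if_splits)
    thus ?thesis unfolding fock_n_def by (auto simp: g_def words_def split: if_splits)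
  qed
  have DI: "Df (I @ v) = (T (g v) - tensor_id T (g v)) I" if I: "I \<in> ?W" for I v
  proof -
    have len: "length I = Suc n" using I by (simp add: words_def)
    have "Df (I @ v) = (\<Sum>J\<in>?W. ccoef T I J * f (J @ v))" using Dfw[of "I @ v"] I len by simp
    also have "\<dots> = (\<Sum>J\<in>?W. ccoef T I J * g v J)" by (rule sum.cong) (auto simp: g_def)
    also have "\<dots> = (T (g v) - tensor_id T (g v)) I" using Q_app[OF assms(1,2) gf[of v], of I] I by simp
    finally show ?thesis .
  qed
  have fs: "(\<lambda>w. (cmod (f w))^2) summable_on UNIV" using assms(3) by (simp add: fock_def)
  have inf1: "infsum (\<lambda>w. (cmod (f w))^2) UNIV \<le> 1" using assms(4) by (simp add: fnorm_def)
  have fin: "sum (\<lambda>w. (cmod (Df w))^2) F \<le> K^2" if F: "finite F" for F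
  proof -
    define V where "V = drop (Suc n) ` F"
    define P where "P = ?W \<times> V"
    define \<phi> where "\<phi> = (\<lambda>p::nat list \<times> nat list. fst p @ snd p)"
    let ?h = "\<lambda>w. (cmod (Df w))^2"
    have fV: "finite V" unfolding V_def using F by simp
    have fP: "finite P" unfolding P_def using fV finite_words by simp
    have inj: "inj_on \<phi> P"
      unfolding inj_on_def P_def \<phi>_def by (auto simp: words_def)
    have "sum ?h F = sum ?h (F \<inter> \<phi> ` P)"
    proof (rule sum.mono_neutral_right[OF F])
      show "\<forall>w\<in>F - F \<inter> \<phi> ` P. ?h w = 0"
      proof
        fix w assume w: "w \<in> F - F \<inter> \<phi> ` P"
        have "take (Suc n) w \<notin> ?W"
        proof
          assume "take (Suc n) w \<in> ?W"
          hence "(take (Suc n) w, drop (Suc n) w) \<in> P" using w unfolding P_def V_def by auto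
          hence "\<phi> (take (Suc n) w, drop (Suc n) w) \<in> \<phi> ` P" by (rule imageI)
          moreover have "\<phi> (take (Suc n) w, drop (Suc n) w) = w" unfolding \<phi>_def by simp
          ultimately have "w \<in> \<phi> ` P" by simp
          thus False using w by auto
        qed
        thus "?h w = 0" using Dfw[of w] by simp
      qed
    qed auto
    also have "\<dots> \<le> sum ?h (\<phi> ` P)" by (rule sum_mono2) (use fP in auto)
    also have "\<dots> = sum (?h \<circ> \<phi>) P" by (rule sum.reindex[OF inj])
    also have "\<dots> = (\<Sum>I\<in>?W. \<Sum>v\<in>V. ?h (I @ v))"
      unfolding P_def \<phi>_def by (simp add: sum.cartesian_product split_def)
    also have "\<dots> = (\<Sum>v\<in>V. \<Sum>I\<in>?W. ?h (I @ v))" by (rule sum.swap)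
    also have "\<dots> = (\<Sum>v\<in>V. (fnorm (T (g v) - tensor_id T (g v)))^2)"
    proof (rule sum.cong[OF refl])
      fix v
      have "(\<Sum>I\<in>?W. ?h (I @ v)) = (\<Sum>I\<in>?W. (cmod ((T (g v) - tensor_id T (g v)) I))^2)"
        by (rule sum.cong) (auto simp: DI)
      also have "\<dots> = (fnorm (T (g v) - tensor_id T (g v)))^2"
        unfolding fnormQ[OF assms(1,2) gf[of v]] by (simp add: sum_nonneg)
      finally show "(\<Sum>I\<in>?W. ?h (I @ v)) = (fnorm (T (g v) - tensor_id T (g v)))^2" .
    qed
    also have "\<dots> \<le> (\<Sum>v\<in>V. (K * fnorm (g v))^2)"
    proof (rule sum_mono)
      fix v show "(fnorm (T (g v) - tensor_id T (g v)))^2 \<le> (K * fnorm (g v))^2"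
        using QB[OF assms(1,2) gf[of v]] fnorm_nonneg unfolding K_def by (intro power_mono) auto
    qed
    also have "\<dots> = K^2 * (\<Sum>v\<in>V. \<Sum>J\<in>?W. (cmod (f (J @ v)))^2)"
    proof -
      have "(fnorm (g v))^2 = (\<Sum>J\<in>?W. (cmod (f (J @ v)))^2)" for v
      proof -
        have "(fnorm (g v))^2 = (\<Sum>J\<in>?W. (cmod (g v J))^2)"
          unfolding fnorm_fock_n[OF gf[of v]] by (simp add: sum_nonneg)
        also have "\<dots> = (\<Sum>J\<in>?W. (cmod (f (J @ v)))^2)" by (rule sum.cong) (auto simp: g_def)
        finally show ?thesis .
      qed
      thus ?thesis by (simp add: power_mult_distrib sum_distrib_left)
    qed
    also have "(\<Sum>v\<in>V. \<Sum>J\<in>?W. (cmod (f (J @ v)))^2) = sum (\<lambda>w. (cmod (f w))^2) (\<phi> ` P)"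
    proof -
      have "(\<Sum>v\<in>V. \<Sum>J\<in>?W. (cmod (f (J @ v)))^2) = (\<Sum>J\<in>?W. \<Sum>v\<in>V. (cmod (f (J @ v)))^2)"
        by (rule sum.swap)
      also have "\<dots> = sum ((\<lambda>w. (cmod (f w))^2) \<circ> \<phi>) P"
        unfolding P_def \<phi>_def by (simp add: sum.cartesian_product split_def)
      also have "\<dots> = sum (\<lambda>w. (cmod (f w))^2) (\<phi> ` P)" by (rule sum.reindex[OF inj, symmetric])
      finally show ?thesis .
    qed
    also have "K^2 * sum (\<lambda>w. (cmod (f w))^2) (\<phi> ` P) \<le> K^2 * 1"
    proof (rule mult_left_mono)
      have "sum (\<lambda>w. (cmod (f w))^2) (\<phi> ` P) \<le> infsum (\<lambda>w. (cmod (f w))^2) UNIV"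
        by (rule finite_sum_le_infsum[OF fs]) (use fP in auto)
      thus "sum (\<lambda>w. (cmod (f w))^2) (\<phi> ` P) \<le> 1" using inf1 by linarith
    qed simp
    finally show ?thesis by simp
  qed
  have summ: "(\<lambda>w. (cmod (Df w))^2) summable_on UNIV"
    by (rule nonneg_bdd_above_summable_on) (auto intro!: bdd_aboveI2[where M="K^2"] fin)
  have "infsum (\<lambda>w. (cmod (Df w))^2) UNIV \<le> K^2"
    by (rule infsum_le_finite_sums[OF summ]) (rule fin)
  hence "fnorm Df \<le> sqrt (K^2)" unfolding fnorm_def by (rule real_sqrt_le_mono)
  thus ?thesis using Kn unfolding Df_def K_def by simp
qed


theorem lemma3p3:
  fixes d n :: nat and T :: fop
  assumes "d \<ge> 2" and "bounded_op d T" and "block_diag d T" and "n \<ge> 1"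
  shows "op_norm d (\<lambda>f. C_approx d T (Suc n) f - C_approx d T n f)
       = op_norm_on d (Suc n) (\<lambda>f. T f - tensor_id T f)"
proof -
  define S1 where "S1 = {fnorm ((\<lambda>f. C_approx d T (Suc n) f - C_approx d T n f) f) | f. f \<in> fock d \<and> fnorm f \<le> 1}"
  define S2 where "S2 = {fnorm ((\<lambda>f. T f - tensor_id T f) f) | f. f \<in> fock_n d (Suc n) \<and> fnorm f \<le> 1}"
  have K: "op_norm_on d (Suc n) (\<lambda>f. T f - tensor_id T f) = Sup S2" unfolding op_norm_on_def S2_def ..
  have O: "op_norm d (\<lambda>f. C_approx d T (Suc n) f - C_approx d T n f) = Sup S1"
    unfolding op_norm_def S1_def ..
  have sub: "S2 \<subseteq> S1"
  proof
    fix x assume "x \<in> S2"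
    then obtain f where f: "f \<in> fock_n d (Suc n)" "fnorm f \<le> 1" "x = fnorm (T f - tensor_id T f)"
      unfolding S2_def by auto
    have "f \<in> fock d" using f(1) unfolding fock_n_def by auto
    moreover have "x = fnorm (C_approx d T (Suc n) f - C_approx d T n f)" using f(3) DQ[OF assms(2,3) f(1)] by simp
    ultimately show "x \<in> S1" unfolding S1_def using f(2) by auto
  qed
  have ne2: "S2 \<noteq> {}"
  proof -
    have "fnorm (\<lambda>w. 0) \<le> 1" by (simp add: fnorm_def)
    thus ?thesis unfolding S2_def using zero_fock_n by blast
  qed
  have ub: "x \<le> Sup S2" if x1: "x \<in> S1" for x
  proof -
    obtain f where f: "f \<in> fock d" "fnorm f \<le> 1" "x = fnorm (C_approx d T (Suc n) f - C_approx d T n f)"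
      using x1 unfolding S1_def by blast
    show ?thesis using B[OF assms(2,3) f(1,2), of n] K f(3) by simp
  qed
  have bdd1: "bdd_above S1" using ub by (rule bdd_aboveI)
  have "Sup S1 \<le> Sup S2" using sub ne2 ub by (intro cSup_least) auto
  moreover have "Sup S2 \<le> Sup S1" by (rule cSup_subset_mono[OF ne2 bdd1 sub])
  ultimately show ?thesis using K O by simp
qed

end
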